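(* The variety $\mathfrak B$ of all bicommutative algebras is generated by its free algebra of rank one, $F_1(\mathfrak B)$; that is, every polynomial identity satisfied by $F_1(\mathfrak B)$ holds in all bicommutative algebras.
   Context: $K$ is a field of characteristic $0$. A bicommutative algebra is a (nonassociative) $K$-algebra satisfying $(x_1x_2)x_3=(x_1x_3)x_2$ and $x_1(x_2x_3)=x_2(x_1x_3)$; $\mathfrak B$ is the variety of such algebras and $F_1(\mathfrak B)$ its relatively free algebra on one generator. *)

theory Defs
  imports Main "HOL.Vector_Spaces"
begin

text \<open>Nonassociative polynomials (terms) over the field 'k in the variables x_0, x_1, ...
  These are formal expressions built from variables, zero, addition, scalar multiplication
  and the (nonassociative) binary product; every element of the absolutely free
  nonassociative algebra K{x_0,x_1,...} is represented by such a term.\<close>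

datatype 'k npoly =
    PVar nat
  | PZero
  | PAdd "'k npoly" "'k npoly"
  | PSmult 'k "'k npoly"
  | PMul "'k npoly" "'k npoly"

primrec peval :: "('k \<Rightarrow> 'a::ab_group_add \<Rightarrow> 'a) \<Rightarrow> ('a \<Rightarrow> 'a \<Rightarrow> 'a) \<Rightarrow> (nat \<Rightarrow> 'a) \<Rightarrow> 'k npoly \<Rightarrow> 'a"
where
  "peval scale mult v (PVar i) = v i"
| "peval scale mult v PZero = 0"
| "peval scale mult v (PAdd p q) = peval scale mult v p + peval scale mult v q"
| "peval scale mult v (PSmult c p) = scale c (peval scale mult v p)"
| "peval scale mult v (PMul p q) = mult (peval scale mult v p) (peval scale mult v q)"

definition bicomm_algebra :: "('k::field \<Rightarrow> 'a::ab_group_add \<Rightarrow> 'a) \<Rightarrow> ('a \<Rightarrow> 'a \<Rightarrow> 'a) \<Rightarrow> bool"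
where
  "bicomm_algebra scale mult \<longleftrightarrow>
     module scale
   \<and> (\<forall>x y z. mult (x + y) z = mult x z + mult y z)
   \<and> (\<forall>x y z. mult x (y + z) = mult x y + mult x z)
   \<and> (\<forall>c x y. mult (scale c x) y = scale c (mult x y))
   \<and> (\<forall>c x y. mult x (scale c y) = scale c (mult x y))
   \<and> (\<forall>x y z. mult (mult x y) z = mult (mult x z) y)
   \<and> (\<forall>x y z. mult x (mult y z) = mult y (mult x z))"

definition holds_in :: "('k \<Rightarrow> 'a::ab_group_add \<Rightarrow> 'a) \<Rightarrow> ('a \<Rightarrow> 'a \<Rightarrow> 'a) \<Rightarrow> 'k npoly \<Rightarrow> bool"
where "holds_in scale mult f \<longleftrightarrow> (\<forall>v. peval scale mult v f = 0)"

text \<open>The congruence on terms generated by the vector space axioms, bilinearity of the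
  product and the bicommutative identities. The quotient of the term algebra by it is the
  relatively free algebra F(B); restricted to terms in the single variable x_0 it gives
  F_1(B).\<close>

inductive beq :: "'k::field npoly \<Rightarrow> 'k npoly \<Rightarrow> bool" where
  refl: "beq p p"
| sym: "beq p q \<Longrightarrow> beq q p"
| trans: "beq p q \<Longrightarrow> beq q r \<Longrightarrow> beq p r"
| cong_add: "beq p p' \<Longrightarrow> beq q q' \<Longrightarrow> beq (PAdd p q) (PAdd p' q')"
| cong_smult: "beq p p' \<Longrightarrow> beq (PSmult c p) (PSmult c p')"
| cong_mul: "beq p p' \<Longrightarrow> beq q q' \<Longrightarrow> beq (PMul p q) (PMul p' q')"
| add_assoc: "beq (PAdd (PAdd p q) r) (PAdd p (PAdd q r))"
| add_comm: "beq (PAdd p q) (PAdd q p)"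
| add_zero: "beq (PAdd PZero p) p"
| add_neg: "beq (PAdd p (PSmult (-1) p)) PZero"
| smult_add: "beq (PSmult c (PAdd p q)) (PAdd (PSmult c p) (PSmult c q))"
| add_smult: "beq (PSmult (c + d) p) (PAdd (PSmult c p) (PSmult d p))"
| smult_smult: "beq (PSmult c (PSmult d p)) (PSmult (c * d) p)"
| smult_one: "beq (PSmult 1 p) p"
| mul_add_left: "beq (PMul (PAdd p q) r) (PAdd (PMul p r) (PMul q r))"
| mul_add_right: "beq (PMul p (PAdd q r)) (PAdd (PMul p q) (PMul p r))"
| mul_smult_left: "beq (PMul (PSmult c p) q) (PSmult c (PMul p q))"
| mul_smult_right: "beq (PMul p (PSmult c q)) (PSmult c (PMul p q))"
| bicomm_left: "beq (PMul (PMul p q) r) (PMul (PMul p r) q)"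
| bicomm_right: "beq (PMul p (PMul q r)) (PMul q (PMul p r))"

primrec pvars :: "'k npoly \<Rightarrow> nat set" where
  "pvars (PVar i) = {i}"
| "pvars PZero = {}"
| "pvars (PAdd p q) = pvars p \<union> pvars q"
| "pvars (PSmult c p) = pvars p"
| "pvars (PMul p q) = pvars p \<union> pvars q"

primrec psubst :: "(nat \<Rightarrow> 'k npoly) \<Rightarrow> 'k npoly \<Rightarrow> 'k npoly" where
  "psubst s (PVar i) = s i"
| "psubst s PZero = PZero"
| "psubst s (PAdd p q) = PAdd (psubst s p) (psubst s q)"
| "psubst s (PSmult c p) = PSmult c (psubst s p)"
| "psubst s (PMul p q) = PMul (psubst s p) (psubst s q)"

text \<open>f = 0 holds in F_1(B): the elements of F_1(B) are beq-classes of terms in the single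
  variable x_0; evaluating f at the classes of s 0, s 1, ... gives the class of psubst s f
  (evaluation in the term algebra is substitution), and this must be the zero class.\<close>

definition holds_in_F1B :: "'k::field npoly \<Rightarrow> bool"
where "holds_in_F1B f \<longleftrightarrow> (\<forall>s. (\<forall>i. pvars (s i) \<subseteq> {0}) \<longrightarrow> beq (psubst s f) PZero)"

end

theory Submission imports Defs "HOL-Library.Multiset" "HOL-Library.Product_Plus" "HOL-Computational_Algebra.Polynomial" begin

lemma beq_sound:
  assumes A: "bicomm_algebra scale mul" and "beq p q"
  shows "peval scale mul v p = peval scale mul v q"
  using assms(2)
proof (induction rule: beq.induct)
  case (add_neg p)
  have M: "module scale" using A unfolding bicomm_algebra_def by blast
  show ?case using module.scale_minus_left[OF M, of 1] module.scale_one[OF M] by simp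
next
  case (smult_add c p q)
  have M: "module scale" using A unfolding bicomm_algebra_def by blast
  show ?case using module.scale_right_distrib[OF M] by simp
next
  case (add_smult c d p)
  have M: "module scale" using A unfolding bicomm_algebra_def by blast
  show ?case using module.scale_left_distrib[OF M] by simp
next
  case (smult_smult c d p)
  have M: "module scale" using A unfolding bicomm_algebra_def by blast
  show ?case using module.scale_scale[OF M] by simp
next
  case (smult_one p)
  have M: "module scale" using A unfolding bicomm_algebra_def by blast
  show ?case using module.scale_one[OF M] by simp
qed (use A in \<open>auto simp: bicomm_algebra_def add_ac\<close>)

lemma peval_psubst: "peval scale mul v (psubst s f) = peval scale mul (\<lambda>i. peval scale mul v (s i)) f"
  by (induction f) auto

locale bic =
  fixes mul :: "'a::ab_group_add \<Rightarrow> 'a \<Rightarrow> 'a" and v :: "nat \<Rightarrow> 'a"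
  assumes RC: "mul (mul x y) z = mul (mul x z) y"
  and LC: "mul x (mul y z) = mul y (mul x z)"
begin

lemma C: "mul x (mul (mul u w) y) = mul (mul x (mul u w)) y"
  using LC RC by simp

definition LM where "LM = (\<lambda>l w. mul (v l) w)"
definition RM where "RM = (\<lambda>r w. mul w (v r))"

lemma cfc_LM: "comp_fun_commute LM"
  by unfold_locales (auto simp: LM_def fun_eq_iff LC)
lemma cfc_RM: "comp_fun_commute RM"
  by unfold_locales (auto simp: RM_def fun_eq_iff RC)

lemma LM_add[simp]: "fold_mset LM w (add_mset x M) = mul (v x) (fold_mset LM w M)"
  by (subst comp_fun_commute.fold_mset_add_mset[OF cfc_LM]) (simp add: LM_def)
lemma RM_add[simp]: "fold_mset RM w (add_mset x M) = mul (fold_mset RM w M) (v x)"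
  by (subst comp_fun_commute.fold_mset_add_mset[OF cfc_RM]) (simp add: RM_def)
lemma LM_union[simp]: "fold_mset LM w (M + N) = fold_mset LM (fold_mset LM w M) N"
  by (rule comp_fun_commute.fold_mset_union[OF cfc_LM])
lemma RM_union[simp]: "fold_mset RM w (M + N) = fold_mset RM (fold_mset RM w M) N"
  by (rule comp_fun_commute.fold_mset_union[OF cfc_RM])

definition isprod where "isprod w \<longleftrightarrow> (\<exists>a b. w = mul a b)"

lemma isprod_mult[simp]: "isprod (mul a b)" by (auto simp: isprod_def)

lemma isprod_LM: "isprod w \<Longrightarrow> isprod (fold_mset LM w M)"
  by (induction M) (auto simp: )
lemma isprod_RM: "isprod w \<Longrightarrow> isprod (fold_mset RM w M)"
  by (induction M) (auto simp: )

lemma left_RM: "isprod w \<Longrightarrow> mul a (fold_mset RM w M) = fold_mset RM (mul a w) M"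
proof (induction M)
  case empty then show ?case by simp
next
  case (add x M)
  have "isprod (fold_mset RM w M)" using isprod_RM add.prems .
  then obtain p q where pq: "fold_mset RM w M = mul p q" by (auto simp: isprod_def)
  show ?case using add pq
    by (simp add:  C)
qed

lemma RM_LM: "isprod w \<Longrightarrow> mul (fold_mset LM w M) b = fold_mset LM (mul w b) M"
proof (induction M)
  case empty then show ?case by simp
next
  case (add x M)
  have "isprod (fold_mset LM w M)" using isprod_LM add.prems .
  then obtain p q where pq: "fold_mset LM w M = mul p q" by (auto simp: isprod_def)
  have "mul (mul (v x) (fold_mset LM w M)) b = mul (v x) (mul (fold_mset LM w M) b)"
    using pq C by simp
  then show ?case using add by simp
qed

lemma left_LM: "mul a (fold_mset LM w M) = fold_mset LM (mul a w) M"
proof (induction M)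
  case (add x M)
  have "mul a (mul (v x) (fold_mset LM w M)) = mul (v x) (mul a (fold_mset LM w M))" by (rule LC)
  then show ?case using add by simp
qed simp

definition Wc where "Wc l r L R = fold_mset LM (fold_mset RM (mul (v l) (v r)) R) L"

lemma RM_front: "fold_mset RM w (add_mset r R) = fold_mset RM (mul w (v r)) R"
proof -
  have "add_mset r R = {#r#} + R" by simp
  then show ?thesis by (simp only: RM_union) (simp add: RM_def)
qed
lemma LM_front: "fold_mset LM w (add_mset r R) = fold_mset LM (mul (v r) w) R"
proof -
  have "add_mset r R = {#r#} + R" by simp
  then show ?thesis by (simp only: LM_union) (simp add: LM_def)
qed

lemma Wc_swap_r: "Wc l r L (add_mset r' R) = Wc l r' L (add_mset r R)"
  by (simp only: Wc_def RM_front RC)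

lemma Wc_swap_l: "Wc l r (add_mset l' L) R = Wc l' r (add_mset l L) R"
proof -
  have "mul (v l') (fold_mset RM (mul (v l) (v r)) R) = mul (v l) (fold_mset RM (mul (v l') (v r)) R)"
    by (simp add: left_RM LC)
  then show ?thesis by (simp only: Wc_def LM_front)
qed

lemma Wc_indep:
  assumes "add_mset l L = add_mset l' L'" "add_mset r R = add_mset r' R'"
  shows "Wc l r L R = Wc l' r' L' R'"
proof -
  have 1: "Wc l r L R = Wc l' r L' R"
  proof (cases "l = l'")
    case True then show ?thesis using assms by simp
  next
    case False
    then obtain X where "L = add_mset l' X" "L' = add_mset l X"
      using assms(1) False by (auto simp: add_eq_conv_ex)
    then show ?thesis using Wc_swap_l by simp
  qed
  have 2: "Wc l' r L' R = Wc l' r' L' R'"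
  proof (cases "r = r'")
    case True then show ?thesis using assms by simp
  next
    case False
    then obtain X where "R = add_mset r' X" "R' = add_mset r X"
      using assms(2) False by (auto simp: add_eq_conv_ex)
    then show ?thesis using Wc_swap_r by simp
  qed
  show ?thesis using 1 2 by simp
qed

definition Wm where "Wm L R = (let l = (SOME l. l \<in># L); r = (SOME r. r \<in># R) in Wc l r (L - {#l#}) (R - {#r#}))"

lemma Wm_eq: assumes "l \<in># L" "r \<in># R" shows "Wm L R = Wc l r (L - {#l#}) (R - {#r#})"
proof -
  have a: "(SOME l. l \<in># L) \<in># L" "(SOME r. r \<in># R) \<in># R" using assms by (auto intro: someI)
  show ?thesis unfolding Wm_def Let_def
    by (rule Wc_indep) (use a assms in auto)
qed

lemma Wm_eq': "Wm (add_mset l L) (add_mset r R) = Wc l r L R"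
  using Wm_eq[of l "add_mset l L" r "add_mset r R"] by simp

lemma Wm_isprod: assumes "L \<noteq> {#}" "R \<noteq> {#}" shows "isprod (Wm L R)"
proof -
  obtain l L' r R' where "L = add_mset l L'" "R = add_mset r R'" using assms by (cases L; cases R) auto
  then show ?thesis by (simp add: Wm_eq' Wc_def isprod_LM isprod_RM)
qed

lemma W1: "Wm {#i#} {#j#} = mul (v i) (v j)"
  using Wm_eq'[of i "{#}" j "{#}"] by (simp add: Wc_def)

lemma W2: assumes "L \<noteq> {#}" "R \<noteq> {#}" shows "mul (v i) (Wm L R) = Wm (add_mset i L) R"
proof -
  obtain l L' r R' where e: "L = add_mset l L'" "R = add_mset r R'" using assms by (cases L; cases R) auto
  have "mul (v i) (Wm L R) = mul (v i) (fold_mset LM (fold_mset RM (mul (v l) (v r)) R') L')"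
    using e by (simp only: Wm_eq' Wc_def)
  also have "\<dots> = fold_mset LM (fold_mset RM (mul (v l) (v r)) R') (add_mset i L')"
    by (simp only: LM_add)
  also have "\<dots> = Wm (add_mset i L) R"
    using Wm_eq[of l "add_mset i L" r R] e by (simp add: Wc_def)
  finally show ?thesis .
qed

lemma W3: assumes "L \<noteq> {#}" "R \<noteq> {#}" shows "mul (Wm L R) (v j) = Wm L (add_mset j R)"
proof -
  obtain l L' r R' where e: "L = add_mset l L'" "R = add_mset r R'" using assms by (cases L; cases R) auto
  have "mul (Wm L R) (v j) = mul (fold_mset LM (fold_mset RM (mul (v l) (v r)) R') L') (v j)"
    using e by (simp only: Wm_eq' Wc_def)
  also have "\<dots> = fold_mset LM (fold_mset RM (mul (v l) (v r)) (add_mset j R')) L'"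
    by (simp only: RM_LM[OF isprod_RM[OF isprod_mult]] RM_add)
  also have "\<dots> = Wm L (add_mset j R)"
    using Wm_eq[of l L r "add_mset j R"] e by (simp add: Wc_def)
  finally show ?thesis .
qed

lemma W2M: assumes "L \<noteq> {#}" "R \<noteq> {#}" shows "fold_mset LM (Wm L R) M = Wm (L + M) R"
  using assms
proof (induction M)
  case empty then show ?case by simp
next
  case (add x M)
  have IH: "fold_mset LM (Wm L R) M = Wm (L + M) R" using add.IH add.prems by blast
  have "fold_mset LM (Wm L R) (add_mset x M) = mul (v x) (Wm (L + M) R)" by (simp only: LM_add IH)
  also have "\<dots> = Wm (add_mset x (L + M)) R" using add.prems by (intro W2) auto
  finally show ?case by simp
qed

lemma W3M: assumes "L \<noteq> {#}" "R \<noteq> {#}" shows "fold_mset RM (Wm L R) M = Wm L (R + M)"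
  using assms
proof (induction M)
  case empty then show ?case by simp
next
  case (add x M)
  have IH: "fold_mset RM (Wm L R) M = Wm L (R + M)" using add.IH add.prems by blast
  have "fold_mset RM (Wm L R) (add_mset x M) = mul (Wm L (R + M)) (v x)" by (simp only: RM_add IH)
  also have "\<dots> = Wm L (add_mset x (R + M))" using add.prems by (intro W3) auto
  finally show ?case by simp
qed

lemma W4: assumes "L1 \<noteq> {#}" "R1 \<noteq> {#}" "L2 \<noteq> {#}" "R2 \<noteq> {#}"
  shows "mul (Wm L1 R1) (Wm L2 R2) = Wm (L1 + L2) (R1 + R2)"
proof -
  obtain l L' r R' where e: "L2 = add_mset l L'" "R2 = add_mset r R'" using assms by (cases L2; cases R2) auto
  have X: "isprod (Wm L1 R1)" using Wm_isprod assms by simp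
  have "mul (Wm L1 R1) (Wm L2 R2) = fold_mset LM (fold_mset RM (mul (Wm L1 R1) (mul (v l) (v r))) R') L'"
    using e X by (simp only: Wm_eq' Wc_def left_LM left_RM[OF isprod_mult])
  also have "mul (Wm L1 R1) (mul (v l) (v r)) = mul (v l) (mul (Wm L1 R1) (v r))" by (rule LC)
  also have "\<dots> = mul (v l) (Wm L1 (add_mset r R1))" using W3[OF assms(1,2)] by simp
  also have "\<dots> = Wm (add_mset l L1) (add_mset r R1)" using assms by (intro W2) auto
  also have "fold_mset LM (fold_mset RM (Wm (add_mset l L1) (add_mset r R1)) R') L' = Wm (add_mset l L1 + L') (add_mset r R1 + R')"
  proof -
    have "fold_mset RM (Wm (add_mset l L1) (add_mset r R1)) R' = Wm (add_mset l L1) (add_mset r R1 + R')"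
      by (rule W3M) auto
    moreover have "fold_mset LM (Wm (add_mset l L1) (add_mset r R1 + R')) L' = Wm (add_mset l L1 + L') (add_mset r R1 + R')"
      by (rule W2M) auto
    ultimately show ?thesis by simp
  qed
  finally show ?thesis using e by simp
qed

end

fun rp :: "nat multiset \<times> nat multiset \<Rightarrow> nat multiset \<times> nat multiset" where
  "rp (L, R) = (if R = {#} then ({#}, L) else (L, R))"

definition mulm :: "nat multiset \<times> nat multiset \<Rightarrow> nat multiset \<times> nat multiset \<Rightarrow> nat multiset \<times> nat multiset" where
  "mulm m1 m2 = (fst m1 + fst (rp m2), snd m1 + snd (rp m2))"

primrec nf :: "'k::field npoly \<Rightarrow> ('k \<times> (nat multiset \<times> nat multiset)) list" where
  "nf (PVar i) = [(1, ({#i#}, {#}))]"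
| "nf PZero = []"
| "nf (PAdd p q) = nf p @ nf q"
| "nf (PSmult c p) = map (\<lambda>x. (c * fst x, snd x)) (nf p)"
| "nf (PMul p q) = concat (map (\<lambda>x. map (\<lambda>y. (fst x * fst y, mulm (snd x) (snd y))) (nf q)) (nf p))"

definition wfm :: "nat multiset \<times> nat multiset \<Rightarrow> bool" where
  "wfm m \<longleftrightarrow> fst m \<noteq> {#} \<and> (snd m = {#} \<longrightarrow> (\<exists>i. fst m = {#i#}))"

lemma wfm_mulm: "wfm m1 \<Longrightarrow> wfm m2 \<Longrightarrow> wfm (mulm m1 m2)"
  by (cases m2) (auto simp: wfm_def mulm_def)

lemma nf_wf: "\<forall>x\<in>set (nf p). wfm (snd x)"
  by (induction p) (auto simp: wfm_mulm, auto simp: wfm_def)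

context bic begin

definition evm where "evm m = (if snd m = {#} then sum_mset (image_mset v (fst m)) else Wm (fst m) (snd m))"

lemma evm_mul: assumes "wfm m1" "wfm m2" shows "mul (evm m1) (evm m2) = evm (mulm m1 m2)"
proof -
  obtain L1 R1 L2 R2 where m: "m1 = (L1, R1)" "m2 = (L2, R2)" by fastforce
  have L: "L1 \<noteq> {#}" "L2 \<noteq> {#}" using assms m by (auto simp: wfm_def)
  show ?thesis
  proof (cases "R1 = {#}")
    case True
    then obtain i where i: "L1 = {#i#}" using assms m by (auto simp: wfm_def)
    show ?thesis
    proof (cases "R2 = {#}")
      case True2: True
      then obtain j where j: "L2 = {#j#}" using assms m by (auto simp: wfm_def)
      show ?thesis using True True2 i j m by (simp add: evm_def mulm_def W1)
    next
      case False
      show ?thesis using True False i m L W2[of L2 R2 i] by (simp add: evm_def mulm_def)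
    qed
  next
    case False
    show ?thesis
    proof (cases "R2 = {#}")
      case True2: True
      then obtain j where j: "L2 = {#j#}" using assms m by (auto simp: wfm_def)
      show ?thesis using False True2 j m L W3[of L1 R1 j] by (simp add: evm_def mulm_def)
    next
      case False2: False
      show ?thesis using False False2 m L W4[of L1 R1 L2 R2] by (simp add: evm_def mulm_def)
    qed
  qed
qed

end

definition evnf :: "('k \<Rightarrow> 'a::ab_group_add \<Rightarrow> 'a) \<Rightarrow> ('a \<Rightarrow> 'a \<Rightarrow> 'a) \<Rightarrow> (nat \<Rightarrow> 'a) \<Rightarrow> ('k \<times> (nat multiset \<times> nat multiset)) list \<Rightarrow> 'a" where
  "evnf scale mul v xs = sum_list (map (\<lambda>x. scale (fst x) (bic.evm mul v (snd x))) xs)"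

lemma sum_list_concat_map: "sum_list (map h (concat (map g xs))) = sum_list (map (\<lambda>x. sum_list (map h (g x))) xs)"
  by (induction xs) auto

lemma bic_of: "bicomm_algebra scale mul \<Longrightarrow> bic mul"
  unfolding bicomm_algebra_def bic_def by blast

lemma NF:
  fixes scale :: "'k::field \<Rightarrow> 'a::ab_group_add \<Rightarrow> 'a" and mul :: "'a \<Rightarrow> 'a \<Rightarrow> 'a"
  assumes BA: "bicomm_algebra scale mul"
  shows "peval scale mul v p = evnf scale mul v (nf p)"
proof -
  interpret bic mul v using bic_of[OF BA] by (simp add: bic_def)
  have M: "module scale" using BA unfolding bicomm_algebra_def by blast
  have addL: "\<And>x y z. mul (x + y) z = mul x z + mul y z"
   and addR: "\<And>x y z. mul x (y + z) = mul x y + mul x z"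
   and scL: "\<And>c x y. mul (scale c x) y = scale c (mul x y)"
   and scR: "\<And>c x y. mul x (scale c y) = scale c (mul x y)"
    using BA unfolding bicomm_algebra_def by blast+
  have zL: "\<And>y. mul 0 y = 0" using addL[of 0 0] by simp
  have zR: "\<And>y. mul y 0 = 0" using addR[of _ 0 0] by simp
  have sumL: "\<And>f xs y. mul (sum_list (map f xs)) y = sum_list (map (\<lambda>x. mul (f x) y) xs)"
  proof -
    fix f :: "'c \<Rightarrow> 'a" and xs y show "mul (sum_list (map f xs)) y = sum_list (map (\<lambda>x. mul (f x) y) xs)"
      by (induction xs) (simp_all add: zL addL)
  qed
  have sumR: "\<And>f xs y. mul y (sum_list (map f xs)) = sum_list (map (\<lambda>x. mul y (f x)) xs)"
  proof -
    fix f :: "'c \<Rightarrow> 'a" and xs y show "mul y (sum_list (map f xs)) = sum_list (map (\<lambda>x. mul y (f x)) xs)"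
      by (induction xs) (simp_all add: zR addR)
  qed
  have scsum: "\<And>c f xs. scale c (sum_list (map f xs)) = sum_list (map (\<lambda>x. scale c (f x)) xs)"
  proof -
    fix c f and xs :: "'c list" show "scale c (sum_list (map f xs)) = sum_list (map (\<lambda>x. scale c (f x)) xs)"
      by (induction xs) (simp_all add: module.scale_right_distrib[OF M] module.scale_zero_right[OF M])
  qed
  show ?thesis
  proof (induction p)
    case (PVar i)
    then show ?case by (simp add: evnf_def evm_def module.scale_one[OF M])
  next
    case PZero
    then show ?case by (simp add: evnf_def)
  next
    case (PAdd p q)
    then show ?case by (simp add: evnf_def)
  next
    case (PSmult c p)
    then show ?case by (simp add: evnf_def scsum o_def module.scale_scale[OF M])
  next
    case (PMul p q)
    let ?F = "\<lambda>x. scale (fst x) (evm (snd x))"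
    have "peval scale mul v (PMul p q) = mul (sum_list (map ?F (nf p))) (sum_list (map ?F (nf q)))"
      using PMul by (simp add: evnf_def)
    also have "\<dots> = sum_list (map (\<lambda>x. sum_list (map (\<lambda>y. mul (?F x) (?F y)) (nf q))) (nf p))"
      unfolding sumL by (simp only: sumR)
    also have "\<dots> = sum_list (map (\<lambda>x. sum_list (map (\<lambda>y. ?F (fst x * fst y, mulm (snd x) (snd y))) (nf q))) (nf p))"
    proof (intro arg_cong[where f=sum_list] map_cong HOL.refl)
      fix x y assume x: "x \<in> set (nf p)" and y: "y \<in> set (nf q)"
      have "wfm (snd x)" "wfm (snd y)" using x y nf_wf by blast+
      then show "mul (?F x) (?F y) = ?F (fst x * fst y, mulm (snd x) (snd y))"
        by (simp add: scL scR evm_mul module.scale_scale[OF M] mult.commute)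
    qed
    also have "\<dots> = evnf scale mul v (nf (PMul p q))"
      by (simp add: evnf_def sum_list_concat_map o_def)
    finally show ?case .
  qed
qed


section \<open>Polynomial identity lemmas\<close>

lemma poly_uni:
  fixes w :: "'j \<Rightarrow> 'k::field_char_0"
  assumes "finite J" "\<And>t. (\<Sum>j\<in>J. w j * t ^ e j) = 0"
  shows "(\<Sum>j\<in>{j\<in>J. e j = k}. w j) = 0"
proof -
  define p where "p = (\<Sum>j\<in>J. monom (w j) (e j))"
  have "\<forall>t. poly p t = 0" using assms(2) by (simp add: p_def poly_sum poly_monom)
  then have "p = 0" using poly_all_0_iff_0 by blast
  then have "coeff p k = 0" by simp
  moreover have "coeff p k = (\<Sum>j\<in>J. if e j = k then w j else 0)"
    by (simp add: p_def coeff_sum)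
  moreover have "(\<Sum>j\<in>J. if e j = k then w j else 0) = (\<Sum>j\<in>{j\<in>J. e j = k}. w j)"
    using assms(1) by (simp add: sum.inter_filter)
  ultimately show ?thesis by simp
qed

lemma poly_multi:
  fixes c :: "'j \<Rightarrow> 'k::field_char_0" and M :: "'j \<Rightarrow> 'v multiset"
  assumes "finite V" "finite J" "\<forall>j\<in>J. set_mset (M j) \<subseteq> V"
    "\<And>z. (\<Sum>j\<in>J. c j * prod_mset (image_mset z (M j))) = 0"
  shows "(\<Sum>j\<in>{j\<in>J. M j = S}. c j) = 0"
  using assms
proof (induction V arbitrary: J M S rule: finite_induct)
  case empty
  then have M0: "\<forall>j\<in>J. M j = {#}" by auto
  have s0: "(\<Sum>j\<in>J. c j) = 0" using empty.prems(3)[of "\<lambda>_. 0"] M0 by simp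
  have "{j\<in>J. M j = S} = (if S = {#} then J else {})" using M0 by auto
  then show ?case using s0 by simp
next
  case (insert x V)
  define e where "e j = count (M j) x" for j
  define M' where "M' j = filter_mset (\<lambda>y. y \<noteq> x) (M j)" for j
  have part: "M j = replicate_mset (e j) x + M' j" for j
  proof -
    have "M j = filter_mset (\<lambda>y. y = x) (M j) + M' j" unfolding M'_def by (rule multiset_partition)
    then show ?thesis by (simp add: filter_eq_replicate_mset e_def)
  qed
  have split: "prod_mset (image_mset z (M j)) = z x ^ e j * prod_mset (image_mset z (M' j))" for z j
    by (subst part) simp
  have indep: "prod_mset (image_mset (z(x:=t)) (M' j)) = prod_mset (image_mset z (M' j))" for z t j
  proof -
    have "image_mset (z(x:=t)) (M' j) = image_mset z (M' j)"
      by (rule image_mset_cong) (auto simp: M'_def)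
    then show ?thesis by simp
  qed
  have coef: "(\<Sum>j\<in>{j\<in>J. e j = k}. c j * prod_mset (image_mset z (M' j))) = 0" for k z
  proof -
    have "(\<Sum>j\<in>J. (c j * prod_mset (image_mset z (M' j))) * t ^ e j) = 0" for t
    proof -
      have sp: "prod_mset (image_mset (z(x:=t)) (M j)) = t ^ e j * prod_mset (image_mset z (M' j))" for j
        using split[of "z(x:=t)" j] indep[of z t j] by simp
      have "(\<Sum>j\<in>J. (c j * prod_mset (image_mset z (M' j))) * t ^ e j) = (\<Sum>j\<in>J. c j * prod_mset (image_mset (z(x:=t)) (M j)))"
        unfolding sp by (simp add: ac_simps)
      also have "\<dots> = 0" by (rule insert.prems(3))
      finally show ?thesis .
    qed
    from poly_uni[OF insert.prems(1) this] show ?thesis .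
  qed
  have IH: "(\<Sum>j\<in>{j\<in>{j\<in>J. e j = k}. M' j = S'}. c j) = 0" for k S'
  proof (rule insert.IH)
    show "finite {j\<in>J. e j = k}" using insert.prems(1) by simp
    show "\<forall>j\<in>{j\<in>J. e j = k}. set_mset (M' j) \<subseteq> V" using insert.prems(2) by (auto simp: M'_def)
    show "(\<Sum>j\<in>{j\<in>J. e j = k}. c j * prod_mset (image_mset z (M' j))) = 0" for z by (rule coef)
  qed
  have "{j\<in>J. M j = S} = {j\<in>{j\<in>J. e j = count S x}. M' j = filter_mset (\<lambda>y. y \<noteq> x) S}"
  proof (intro set_eqI iffI)
    fix j assume "j \<in> {j\<in>J. M j = S}" then show "j \<in> {j\<in>{j\<in>J. e j = count S x}. M' j = filter_mset (\<lambda>y. y \<noteq> x) S}"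
      by (auto simp: e_def M'_def)
  next
    fix j assume j: "j \<in> {j\<in>{j\<in>J. e j = count S x}. M' j = filter_mset (\<lambda>y. y \<noteq> x) S}"
    have "S = filter_mset (\<lambda>y. y = x) S + filter_mset (\<lambda>y. y \<noteq> x) S" by (rule multiset_partition)
    then have "S = replicate_mset (count S x) x + filter_mset (\<lambda>y. y \<noteq> x) S" by (simp add: filter_eq_replicate_mset)
    then have "M j = S" using part[of j] j by simp
    then show "j \<in> {j\<in>J. M j = S}" using j by simp
  qed
  then show ?case using IH by simp
qed

section \<open>The two-dimensional model\<close>

definition scaleQ :: "'k::field \<Rightarrow> 'k \<times> 'k \<Rightarrow> 'k \<times> 'k" where "scaleQ c x = (c * fst x, c * snd x)"
definition mulQ :: "'k::field \<times> 'k \<Rightarrow> 'k \<times> 'k \<Rightarrow> 'k \<times> 'k" where "mulQ x y = (fst x * snd y, fst x * snd y)"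

lemma bicomm_Q: "bicomm_algebra scaleQ mulQ"
  unfolding bicomm_algebra_def module_def scaleQ_def mulQ_def by (auto simp: algebra_simps)

lemma evmQ:
  fixes a b :: "nat \<Rightarrow> 'k::field"
  assumes "wfm m"
  shows "fst (bic.evm mulQ (\<lambda>i. (a i, b i)) m) = prod_mset (image_mset a (fst m)) * prod_mset (image_mset b (snd m))"
proof -
  interpret Q: bic mulQ "\<lambda>i. (a i, b i)" using bic_of[OF bicomm_Q] by (simp add: bic_def)
  have RMQ: "fst w = snd w \<Longrightarrow> fold_mset Q.RM w R = (fst w * prod_mset (image_mset b R), fst w * prod_mset (image_mset b R))" for w R
  proof (induction R)
    case empty then show ?case by (cases w) simp
  next
    case (add y R) then show ?case by (simp only: Q.RM_add) (simp add: mulQ_def mult_ac)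
  qed
  have LMQ: "fst w = snd w \<Longrightarrow> fold_mset Q.LM w L = (prod_mset (image_mset a L) * snd w, prod_mset (image_mset a L) * snd w)" for w L
  proof (induction L)
    case empty then show ?case by (cases w) simp
  next
    case (add y L) then show ?case by (simp only: Q.LM_add) (simp add: mulQ_def mult_ac)
  qed
  obtain L R where m: "m = (L, R)" by fastforce
  show ?thesis
  proof (cases "R = {#}")
    case True
    then obtain i where "L = {#i#}" using assms m by (auto simp: wfm_def)
    then show ?thesis using m True by (simp add: Q.evm_def)
  next
    case False
    obtain l L' where L: "L = add_mset l L'" using assms m by (cases L) (auto simp: wfm_def)
    obtain r R' where R: "R = add_mset r R'" using False by (cases R) auto
    have c: "mulQ (a l, b l) (a r, b r) = (a l * b r, a l * b r)" by (simp add: mulQ_def)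
    have r1: "fold_mset Q.RM (mulQ (a l, b l) (a r, b r)) R' = (a l * b r * prod_mset (image_mset b R'), a l * b r * prod_mset (image_mset b R'))"
      using RMQ[of "mulQ (a l, b l) (a r, b r)" R'] c by simp
    have r2: "fold_mset Q.LM (fold_mset Q.RM (mulQ (a l, b l) (a r, b r)) R') L' = (prod_mset (image_mset a L') * (a l * b r * prod_mset (image_mset b R')), prod_mset (image_mset a L') * (a l * b r * prod_mset (image_mset b R')))"
      using LMQ[of "fold_mset Q.RM (mulQ (a l, b l) (a r, b r)) R'" L'] r1 by simp
    have "fst (Q.Wm L R) = prod_mset (image_mset a L) * prod_mset (image_mset b R)"
      using L R by (simp only: Q.Wm_eq' Q.Wc_def r2) (simp add: mult_ac)
    then show ?thesis using m False by (simp add: Q.evm_def)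
  qed
qed

lemma fst_sum_list: "fst (sum_list (map g xs)) = sum_list (map (\<lambda>x. fst (g x)) xs)"
  by (induction xs) auto

lemma step2:
  fixes f :: "'k::field_char_0 npoly" and a b :: "nat \<Rightarrow> 'k"
  assumes "holds_in_F1B f"
  shows "sum_list (map (\<lambda>x. fst x * (prod_mset (image_mset a (fst (snd x))) * prod_mset (image_mset b (snd (snd x))))) (nf f)) = 0"
proof -
  define d :: "'k \<times> 'k" where "d = (2, 1)"
  define s where "s i = PAdd (PSmult (a i - b i) (PVar 0)) (PSmult ((2 * b i - a i) / 2) (PMul (PVar 0) (PVar 0)))" for i
  have "\<forall>i. pvars (s i) \<subseteq> {0}" by (simp add: s_def)
  then have "beq (psubst s f) PZero" using assms unfolding holds_in_F1B_def by blast
  then have "peval scaleQ mulQ (\<lambda>_. d) (psubst s f) = peval scaleQ mulQ (\<lambda>_. d) PZero"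
    by (rule beq_sound[OF bicomm_Q])
  moreover have "(\<lambda>i. peval scaleQ mulQ (\<lambda>_. d) (s i)) = (\<lambda>i. (a i, b i))"
    by (auto simp: s_def d_def scaleQ_def mulQ_def field_simps)
  ultimately have "peval scaleQ mulQ (\<lambda>i. (a i, b i)) f = 0" by (simp add: peval_psubst)
  then have "evnf scaleQ mulQ (\<lambda>i. (a i, b i)) (nf f) = 0" by (simp add: NF[OF bicomm_Q])
  then have "fst (evnf scaleQ mulQ (\<lambda>i. (a i, b i)) (nf f)) = 0" by simp
  then have "sum_list (map (\<lambda>x. fst x * fst (bic.evm mulQ (\<lambda>i. (a i, b i)) (snd x))) (nf f)) = 0"
    by (simp add: evnf_def fst_sum_list scaleQ_def)
  moreover have "map (\<lambda>x. fst x * fst (bic.evm mulQ (\<lambda>i. (a i, b i)) (snd x))) (nf f) = map (\<lambda>x. fst x * (prod_mset (image_mset a (fst (snd x))) * prod_mset (image_mset b (snd (snd x))))) (nf f)"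
    using nf_wf[of f] by (auto simp: evmQ)
  ultimately show ?thesis by simp
qed


definition enc :: "nat multiset \<times> nat multiset \<Rightarrow> (nat + nat) multiset" where
  "enc m = image_mset Inl (fst m) + image_mset Inr (snd m)"

lemma enc_inj: assumes "enc m1 = enc m2" shows "m1 = m2"
proof -
  have l: "image_mset projl (filter_mset isl (enc m)) = fst m" for m
    by (simp add: enc_def filter_mset_image_mset image_mset.compositionality o_def)
  have r: "image_mset projr (filter_mset (\<lambda>x. \<not> isl x) (enc m)) = snd m" for m
    by (simp add: enc_def filter_mset_image_mset image_mset.compositionality o_def)
  have "fst m1 = fst m2" "snd m1 = snd m2" using l[of m1] l[of m2] r[of m1] r[of m2] assms by simp_all
  then show ?thesis by (simp add: prod_eq_iff)
qed

lemma enc_prod: "prod_mset (image_mset z (enc m)) = prod_mset (image_mset (z \<circ> Inl) (fst m)) * prod_mset (image_mset (z \<circ> Inr) (snd m))"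
  by (simp add: enc_def image_mset.compositionality)

lemma sum_list_map_nth: "sum_list (map g xs) = (\<Sum>j\<in>{..<length xs}. g (xs ! j))"
  by (simp add: sum_list_sum_nth atLeast0LessThan)

theorem corollary4p5:
  fixes f :: "'k::field_char_0 npoly"
    and scale :: "'k \<Rightarrow> 'a::ab_group_add \<Rightarrow> 'a"
    and mult :: "'a \<Rightarrow> 'a \<Rightarrow> 'a"
  assumes "holds_in_F1B f"
    and "bicomm_algebra scale mult"
  shows "holds_in scale mult f"
proof -
  have M: "module scale" using assms(2) unfolding bicomm_algebra_def by blast
  show ?thesis unfolding holds_in_def
  proof
    fix v
    define xs where "xs = nf f"
    define J where "J = {..<length xs}"
    define c where "c j = fst (xs ! j)" for j
    define mm where "mm j = snd (xs ! j)" for j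
    define E where "E j = bic.evm mult v (mm j)" for j
    define MM where "MM j = enc (mm j)" for j
    have fin: "finite J" by (simp add: J_def)
    have key: "(\<Sum>j\<in>J. c j * prod_mset (image_mset z (MM j))) = 0" for z :: "nat + nat \<Rightarrow> 'k"
    proof -
      have "(\<Sum>j\<in>J. c j * prod_mset (image_mset z (MM j))) = sum_list (map (\<lambda>x. fst x * (prod_mset (image_mset (z\<circ>Inl) (fst (snd x))) * prod_mset (image_mset (z\<circ>Inr) (snd (snd x))))) xs)"
        by (simp add: sum_list_map_nth J_def c_def MM_def mm_def enc_prod)
      also have "\<dots> = 0" using step2[OF assms(1)] unfolding xs_def .
      finally show ?thesis .
    qed
    have V: "finite (\<Union>j\<in>J. set_mset (MM j))" using fin by simp
    have grp: "(\<Sum>j\<in>{j\<in>J. MM j = S}. c j) = 0" for S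
      by (rule poly_multi[OF V fin _ key]) auto
    have "peval scale mult v f = sum_list (map (\<lambda>x. scale (fst x) (bic.evm mult v (snd x))) xs)"
      using NF[OF assms(2)] by (simp add: evnf_def xs_def)
    also have "\<dots> = (\<Sum>j\<in>J. scale (c j) (E j))"
      by (simp add: sum_list_map_nth J_def c_def E_def mm_def)
    also have "\<dots> = (\<Sum>S\<in>MM ` J. \<Sum>j\<in>{j. j \<in> J \<and> MM j = S}. scale (c j) (E j))"
      by (rule sum.image_gen[OF fin])
    also have "\<dots> = 0"
    proof (rule sum.neutral, rule ballI)
      fix S assume "S \<in> MM ` J"
      then obtain j0 where j0: "j0 \<in> J" "S = MM j0" by auto
      have "(\<Sum>j\<in>{j. j \<in> J \<and> MM j = S}. scale (c j) (E j)) = (\<Sum>j\<in>{j. j \<in> J \<and> MM j = S}. scale (c j) (E j0))"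
      proof (rule sum.cong[OF HOL.refl])
        fix j assume "j \<in> {j. j \<in> J \<and> MM j = S}"
        then have "mm j = mm j0" using j0 enc_inj unfolding MM_def by auto
        then show "scale (c j) (E j) = scale (c j) (E j0)" by (simp add: E_def)
      qed
      also have "\<dots> = scale (\<Sum>j\<in>{j\<in>J. MM j = S}. c j) (E j0)"
        by (simp add: module.scale_sum_left[OF M])
      also have "\<dots> = 0" using grp by (simp add: module.scale_zero_left[OF M])
      finally show "(\<Sum>j\<in>{j. j \<in> J \<and> MM j = S}. scale (c j) (E j)) = 0" .
    qed
    finally show "peval scale mult v f = 0" .
  qed
qed

end
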